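(* Let $N\ge1$. There exist $n=(N+1)(N+2)/2$ real triples $(b_i,c_i,d_i)$, $i=1,\dots,n$ (for instance $d_i=1$ and $(b_i,c_i)=(b_j,c_k)$ ranging over all pairs with $j,k\in\mathbb{Z}_{\ge0}$, $j+k\le N$, where $b_0,\dots,b_N$ are pairwise distinct reals and $c_0,\dots,c_N$ are pairwise distinct reals), such that, with $A_i=b_i\sigma_X+c_i\sigma_Y+d_i\sigma_Z$, every permutation-invariant Hermitian operator $\rho$ on $N$ qubits (in particular the projector $|\Psi^{PI}\rangle\langle\Psi^{PI}|$ onto any permutation-invariant pure state) can be written as $$\rho=\sum_{i=1}^{n}\sum_{j=0}^{N}\alpha_{ij}\sum_{\pi}\mathbb{I}^{\otimes j}\otimes A_i^{\otimes (N-j)}$$ with real coefficients $\alpha_{ij}$. Consequently, for every state $\sigma$, the fidelity $\langle\Psi^{PI}|\sigma|\Psi^{PI}\rangle$ is a fixed linear combination of expectation values obtainable from the $n$ local measurement settings $A_i^{\otimes N}$; i.e., $C_S(\rho)\le (N+1)(N+2)/2$ for every permutation-invariant $\rho$.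
   Context: $\mathbb{I},\sigma_X,\sigma_Y,\sigma_Z$ are the identity and Pauli matrices. An $N$-qubit operator $\rho$ is permutation invariant (PI) if $P(\pi)\rho P(\pi)^\dagger=\rho$ for all $\pi\in S_N$, where $P(\pi)$ permutes tensor factors. The notation $\sum_\pi \mathbb{I}^{\otimes j}\otimes A^{\otimes(N-j)}$ denotes the sum, over all distinct placements, of tensor products in which exactly $j$ of the $N$ factors are $\mathbb{I}$ and the other $N-j$ are $A$ (each distinct arrangement counted once). A local measurement setting (LMS) is an operator $A^{\otimes N}$ with $A=b\sigma_X+c\sigma_Y+d\sigma_Z$, $b,c,d\in\mathbb{R}$; from it all the expectations $\langle\sum_\pi\mathbb{I}^{\otimes j}\otimes A^{\otimes(N-j)}\rangle$ are obtainable. Measurement complexity: for an $N$-qubit PI operator $\rho$, $C_S(\rho)$ is the minimal $n_A$ such that there exist real $b_i,c_i,d_i$ and real $\alpha_{ij}$ ($1\le i\le n_A$, $0\le j\le N$) with $\rho=\sum_{i=1}^{n_A}\sum_{j=0}^{N}\alpha_{ij}\sum_\pi\mathbb{I}^{\otimes j}\otimes A_i^{\otimes(N-j)}$, $A_i=b_i\sigma_X+c_i\sigma_Y+d_i\sigma_Z$. *)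

theory Defs
  imports "HOL-Analysis.Analysis" "HOL-Combinatorics.Permutations"
begin

text \<open>Single-qubit operators: 2x2 complex matrices indexed by bool
  (False = |0>, True = |1>), entry (row, column).
  N-qubit operators: functions on pairs of bit strings (bool lists);
  only entries with both lists of length N are meaningful.\<close>

type_synonym qop = "bool \<Rightarrow> bool \<Rightarrow> complex"
type_synonym nop = "bool list \<Rightarrow> bool list \<Rightarrow> complex"

definition idq :: qop where
  "idq x y = (if x = y then 1 else 0)"

definition sigmaX :: qop where
  "sigmaX x y = (if x \<noteq> y then 1 else 0)"

definition sigmaY :: qop where
  "sigmaY x y = (if x = False \<and> y = True then - \<i> else if x = True \<and> y = False then \<i> else 0)"

definition sigmaZ :: qop where
  "sigmaZ x y = (if x = y then (if x then -1 else 1) else 0)"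

definition pauli_comb :: "real \<Rightarrow> real \<Rightarrow> real \<Rightarrow> qop" where
  "pauli_comb b c d x y =
     complex_of_real b * sigmaX x y + complex_of_real c * sigmaY x y + complex_of_real d * sigmaZ x y"

definition op_eq :: "nat \<Rightarrow> nop \<Rightarrow> nop \<Rightarrow> bool" where
  "op_eq N \<rho> \<sigma> \<longleftrightarrow> (\<forall>x y. length x = N \<longrightarrow> length y = N \<longrightarrow> \<rho> x y = \<sigma> x y)"

definition perm_bits :: "nat \<Rightarrow> (nat \<Rightarrow> nat) \<Rightarrow> bool list \<Rightarrow> bool list" where
  "perm_bits N \<pi> x = map (\<lambda>k. x ! \<pi> k) [0..<N]"

text \<open>P(pi) rho P(pi)^dagger.\<close>
definition perm_conj :: "nat \<Rightarrow> (nat \<Rightarrow> nat) \<Rightarrow> nop \<Rightarrow> nop" where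
  "perm_conj N \<pi> \<rho> x y = \<rho> (perm_bits N \<pi> x) (perm_bits N \<pi> y)"

definition perm_invariant :: "nat \<Rightarrow> nop \<Rightarrow> bool" where
  "perm_invariant N \<rho> \<longleftrightarrow> (\<forall>\<pi>. \<pi> permutes {..<N} \<longrightarrow> op_eq N (perm_conj N \<pi> \<rho>) \<rho>)"

definition hermitian_op :: "nat \<Rightarrow> nop \<Rightarrow> bool" where
  "hermitian_op N \<rho> \<longleftrightarrow> (\<forall>x y. length x = N \<longrightarrow> length y = N \<longrightarrow> \<rho> y x = cnj (\<rho> x y))"

text \<open>sum over distinct placements of I^{(x) j} (x) A^{(x) (N-j)}: sum over the
  j-element subsets S of the N positions, factor I at positions in S, A elsewhere.\<close>
definition sym_placement :: "nat \<Rightarrow> nat \<Rightarrow> qop \<Rightarrow> nop" where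
  "sym_placement N j A x y =
     (\<Sum>S\<in>{S. S \<subseteq> {..<N} \<and> card S = j}.
        \<Prod>k<N. (if k \<in> S then idq else A) (x ! k) (y ! k))"

definition lms_expansion ::
  "nat \<Rightarrow> nat \<Rightarrow> (nat \<Rightarrow> real) \<Rightarrow> (nat \<Rightarrow> real) \<Rightarrow> (nat \<Rightarrow> real) \<Rightarrow> (nat \<Rightarrow> nat \<Rightarrow> real) \<Rightarrow> nop" where
  "lms_expansion N nA b c d \<alpha> x y =
     (\<Sum>i<nA. \<Sum>j\<le>N. complex_of_real (\<alpha> i j) *
        sym_placement N j (pauli_comb (b i) (c i) (d i)) x y)"

definition meas_complexity :: "nat \<Rightarrow> nop \<Rightarrow> nat" where
  "meas_complexity N \<rho> =
     (LEAST nA. \<exists>b c d \<alpha>. op_eq N \<rho> (lms_expansion N nA b c d \<alpha>))"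

end

theory Submission
  imports Defs
begin


inductive polyd2 :: "nat \<Rightarrow> (complex \<Rightarrow> complex \<Rightarrow> complex) \<Rightarrow> bool" where
  pconst: "polyd2 n (\<lambda>b c. a)"
| pvarb: "1 \<le> n \<Longrightarrow> polyd2 n (\<lambda>b c. b)"
| pvarc: "1 \<le> n \<Longrightarrow> polyd2 n (\<lambda>b c. c)"
| padd: "polyd2 n f \<Longrightarrow> polyd2 n g \<Longrightarrow> polyd2 n (\<lambda>b c. f b c + g b c)"
| pmult: "polyd2 m f \<Longrightarrow> polyd2 k g \<Longrightarrow> m + k \<le> n \<Longrightarrow> polyd2 n (\<lambda>b c. f b c * g b c)"

lemma polyd2_mono: "polyd2 m f \<Longrightarrow> m \<le> n \<Longrightarrow> polyd2 n f"
  using pmult[of m f 0 "\<lambda>b c. 1" n] pconst[of 0 1] by simp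

lemma polyd2_subst_b: "polyd2 n f \<Longrightarrow> polyd2 n (\<lambda>b c. f b0 c)"
  by (induction rule: polyd2.induct) (auto intro: polyd2.intros)

lemma polyd2_subst_c: "polyd2 n f \<Longrightarrow> polyd2 n (\<lambda>b c. f b c0)"
  by (induction rule: polyd2.induct) (auto intro: polyd2.intros)

lemma polyd2_deg0: "polyd2 n f \<Longrightarrow> n = 0 \<Longrightarrow> f b c = f b' c'"
  by (induction rule: polyd2.induct) auto

lemma polyd2_Dc: "polyd2 n f \<Longrightarrow> \<exists>g. polyd2 (n - 1) g \<and> (n = 0 \<longrightarrow> (\<forall>b c. g b c = 0))
   \<and> (\<forall>b c. f b c = f b c0 + (c - c0) * g b c)"
proof (induction rule: polyd2.induct)
  case (pconst n a)
  then show ?case by (intro exI[of _ "\<lambda>b c. 0"]) (auto intro: polyd2.intros)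
next
  case (pvarb n)
  then show ?case by (intro exI[of _ "\<lambda>b c. 0"]) (auto intro: polyd2.intros)
next
  case (pvarc n)
  then show ?case by (intro exI[of _ "\<lambda>b c. 1"]) (auto intro: polyd2.intros)
next
  case (padd n f g)
  then obtain g1 g2 where "polyd2 (n - 1) g1" "(n = 0 \<longrightarrow> (\<forall>b c. g1 b c = 0))"
    "(\<forall>b c. f b c = f b c0 + (c - c0) * g1 b c)" "polyd2 (n - 1) g2" "(n = 0 \<longrightarrow> (\<forall>b c. g2 b c = 0))"
    "(\<forall>b c. g b c = g b c0 + (c - c0) * g2 b c)" by blast
  then show ?case
    by (intro exI[of _ "\<lambda>b c. g1 b c + g2 b c"]) (auto intro: polyd2.intros simp: algebra_simps)
next
  case (pmult m f k g n)
  then obtain g1 g2 where h1: "polyd2 (m - 1) g1" "(m = 0 \<longrightarrow> (\<forall>b c. g1 b c = 0))"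
    "(\<forall>b c. f b c = f b c0 + (c - c0) * g1 b c)" and h2: "polyd2 (k - 1) g2" "(k = 0 \<longrightarrow> (\<forall>b c. g2 b c = 0))"
    "(\<forall>b c. g b c = g b c0 + (c - c0) * g2 b c)" by blast
  have fc: "polyd2 m (\<lambda>b c. f b c0)" using pmult.hyps(1) by (rule polyd2_subst_c)
  define G where "G = (\<lambda>b c. g1 b c * g b c + f b c0 * g2 b c)"
  have eq: "\<forall>b c. f b c * g b c = f b c0 * g b c0 + (c - c0) * G b c"
  proof (intro allI)
    fix b c
    have "f b c * g b c = (f b c0 + (c - c0) * g1 b c) * g b c" using h1(3) by metis
    also have "\<dots> = f b c0 * (g b c0 + (c - c0) * g2 b c) + (c - c0) * g1 b c * g b c"
      using h2(3) by (metis distrib_right mult.assoc)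
    finally show "f b c * g b c = f b c0 * g b c0 + (c - c0) * G b c"
      unfolding G_def by (simp add: algebra_simps)
  qed
  have P: "polyd2 (n - 1) G"
  proof (cases "m = 0")
    case True
    then have "G = (\<lambda>b c. f b c0 * g2 b c)" using h1(2) unfolding G_def by auto
    then show ?thesis using polyd2.pmult[OF fc h2(1), of "n - 1"] pmult.hyps True by auto
  next
    case m: False
    show ?thesis
    proof (cases "k = 0")
      case True
      then have "G = (\<lambda>b c. g1 b c * g b c)" using h2(2) unfolding G_def by auto
      then show ?thesis using polyd2.pmult[OF h1(1) pmult.hyps(2), of "n - 1"] pmult.hyps True by auto
    next
      case False
      have a: "polyd2 (n - 1) (\<lambda>b c. g1 b c * g b c)"
        using polyd2.pmult[OF h1(1) pmult.hyps(2), of "n - 1"] pmult.hyps m False by auto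
      have b: "polyd2 (n - 1) (\<lambda>b c. f b c0 * g2 b c)"
        using polyd2.pmult[OF fc h2(1), of "n - 1"] pmult.hyps m False by auto
      show ?thesis unfolding G_def using polyd2.padd[OF a b] .
    qed
  qed
  have Z: "n = 0 \<longrightarrow> (\<forall>b c. G b c = 0)" using h1(2) h2(2) pmult.hyps(3) unfolding G_def by auto
  show ?case using P Z eq by blast
qed

lemma polyd2_Db: "polyd2 n f \<Longrightarrow> \<exists>g. polyd2 (n - 1) g \<and> (n = 0 \<longrightarrow> (\<forall>b c. g b c = 0))
   \<and> (\<forall>b c. f b c = f b0 c + (b - b0) * g b c)"
proof (induction rule: polyd2.induct)
  case (pconst n a)
  then show ?case by (intro exI[of _ "\<lambda>b c. 0"]) (auto intro: polyd2.intros)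
next
  case (pvarb n)
  then show ?case by (intro exI[of _ "\<lambda>b c. 1"]) (auto intro: polyd2.intros)
next
  case (pvarc n)
  then show ?case by (intro exI[of _ "\<lambda>b c. 0"]) (auto intro: polyd2.intros)
next
  case (padd n f g)
  then obtain g1 g2 where "polyd2 (n - 1) g1" "(n = 0 \<longrightarrow> (\<forall>b c. g1 b c = 0))"
    "(\<forall>b c. f b c = f b0 c + (b - b0) * g1 b c)" "polyd2 (n - 1) g2" "(n = 0 \<longrightarrow> (\<forall>b c. g2 b c = 0))"
    "(\<forall>b c. g b c = g b0 c + (b - b0) * g2 b c)" by blast
  then show ?case
    by (intro exI[of _ "\<lambda>b c. g1 b c + g2 b c"]) (auto intro: polyd2.intros simp: algebra_simps)
next
  case (pmult m f k g n)
  then obtain g1 g2 where h1: "polyd2 (m - 1) g1" "(m = 0 \<longrightarrow> (\<forall>b c. g1 b c = 0))"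
    "(\<forall>b c. f b c = f b0 c + (b - b0) * g1 b c)" and h2: "polyd2 (k - 1) g2" "(k = 0 \<longrightarrow> (\<forall>b c. g2 b c = 0))"
    "(\<forall>b c. g b c = g b0 c + (b - b0) * g2 b c)" by blast
  have fc: "polyd2 m (\<lambda>b c. f b0 c)" using pmult.hyps(1) by (rule polyd2_subst_b)
  define G where "G = (\<lambda>b c. g1 b c * g b c + f b0 c * g2 b c)"
  have eq: "\<forall>b c. f b c * g b c = f b0 c * g b0 c + (b - b0) * G b c"
  proof (intro allI)
    fix b c
    have "f b c * g b c = (f b0 c + (b - b0) * g1 b c) * g b c" using h1(3) by metis
    also have "\<dots> = f b0 c * (g b0 c + (b - b0) * g2 b c) + (b - b0) * g1 b c * g b c"
      using h2(3) by (metis distrib_right mult.assoc)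
    finally show "f b c * g b c = f b0 c * g b0 c + (b - b0) * G b c"
      unfolding G_def by (simp add: algebra_simps)
  qed
  have P: "polyd2 (n - 1) G"
  proof (cases "m = 0")
    case True
    then have "G = (\<lambda>b c. f b0 c * g2 b c)" using h1(2) unfolding G_def by auto
    then show ?thesis using polyd2.pmult[OF fc h2(1), of "n - 1"] pmult.hyps True by auto
  next
    case m: False
    show ?thesis
    proof (cases "k = 0")
      case True
      then have "G = (\<lambda>b c. g1 b c * g b c)" using h2(2) unfolding G_def by auto
      then show ?thesis using polyd2.pmult[OF h1(1) pmult.hyps(2), of "n - 1"] pmult.hyps True by auto
    next
      case False
      have a: "polyd2 (n - 1) (\<lambda>b c. g1 b c * g b c)"
        using polyd2.pmult[OF h1(1) pmult.hyps(2), of "n - 1"] pmult.hyps m False by auto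
      have b: "polyd2 (n - 1) (\<lambda>b c. f b0 c * g2 b c)"
        using polyd2.pmult[OF fc h2(1), of "n - 1"] pmult.hyps m False by auto
      show ?thesis unfolding G_def using polyd2.padd[OF a b] .
    qed
  qed
  have Z: "n = 0 \<longrightarrow> (\<forall>b c. G b c = 0)" using h1(2) h2(2) pmult.hyps(3) unfolding G_def by auto
  show ?case using P Z eq by blast
qed

lemma polyd2_prod: "finite K \<Longrightarrow> (\<forall>l\<in>K. polyd2 1 (f l)) \<Longrightarrow> polyd2 (card K) (\<lambda>b c. \<Prod>l\<in>K. f l b c)"
proof (induction K rule: finite_induct)
  case empty
  then show ?case using pconst[of 0 1] by simp
next
  case (insert x F)
  then show ?case using pmult[of 1 "f x" "card F" "\<lambda>b c. \<Prod>l\<in>F. f l b c" "card (insert x F)"] by simp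
qed



locale cspace =
  fixes R :: "('u \<Rightarrow> 'v \<Rightarrow> complex) \<Rightarrow> bool"
  assumes Radd: "R F \<Longrightarrow> R G \<Longrightarrow> R (\<lambda>u v. F u v + G u v)"
    and Rscale: "R F \<Longrightarrow> R (\<lambda>u v. s * F u v)"
begin

lemma Rlin: "R F \<Longrightarrow> R G \<Longrightarrow> R (\<lambda>u v. s * F u v + t * G u v)"
  using Radd Rscale by blast

lemma UI:
  fixes bs :: "nat \<Rightarrow> complex"
  assumes "inj bs"
  shows "(\<forall>u v. polyd2 N (\<lambda>b c. F b u v)) \<Longrightarrow> (\<forall>j\<le>N. R (F (bs j))) \<Longrightarrow> R (F x)"
  using assms
proof (induction N arbitrary: bs F)
  case 0
  have "F x = F (bs 0)"
    using polyd2_deg0[OF 0(1)[rule_format]] by (intro ext) blast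
  then show ?case using 0 by auto
next
  case (Suc N)
  define b0 where "b0 = bs 0"
  have "\<forall>u v. \<exists>g. polyd2 N g \<and> (\<forall>b c. F b u v = F b0 u v + (b - b0) * g b c)"
    using polyd2_Db[of "Suc N" _ b0] Suc.prems(1) by fastforce
  then obtain g where g: "\<And>u v. polyd2 N (g u v)" "\<And>u v b c. F b u v = F b0 u v + (b - b0) * g u v b c"
    by metis
  define G where "G = (\<lambda>b u v. g u v b 0)"
  have GP: "\<forall>u v. polyd2 N (\<lambda>b c. G b u v)"
    unfolding G_def using polyd2_subst_c[OF g(1)] by blast
  have Fx: "F x = (\<lambda>u v. 1 * F b0 u v + (x - b0) * G x u v)"
    unfolding G_def using g(2)[where b=x and c=0] by (intro ext) simp
  have injs: "inj (bs \<circ> Suc)" using inj_compose[OF Suc.prems(3) inj_Suc] .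
  have "R (G ((bs \<circ> Suc) j))" if "j \<le> N" for j
  proof -
    have ne: "bs (Suc j) - b0 \<noteq> 0" using Suc.prems(3) unfolding b0_def inj_def by auto
    have Geq: "G ((bs \<circ> Suc) j) = (\<lambda>u v. (1 / (bs (Suc j) - b0)) * (F (bs (Suc j)) u v + (- 1) * F b0 u v))"
    proof (intro ext)
      fix u v
      have "F (bs (Suc j)) u v + (- 1) * F b0 u v = (bs (Suc j) - b0) * g u v (bs (Suc j)) 0"
        using g(2)[where b="bs (Suc j)" and c=0 and u=u and v=v] by simp
      then show "G ((bs \<circ> Suc) j) u v = (1 / (bs (Suc j) - b0)) * (F (bs (Suc j)) u v + (- 1) * F b0 u v)"
        unfolding G_def using ne by simp
    qed
    have "R (F (bs (Suc j)))" "R (F b0)" using Suc.prems(2) that unfolding b0_def by auto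
    then show ?thesis unfolding Geq by (intro Rscale Radd)
  qed
  then have "R (G x)" using Suc.IH[OF GP _ injs] by blast
  moreover have "R (F b0)" using Suc.prems(2) unfolding b0_def by auto
  ultimately show ?case unfolding Fx using Rlin by blast
qed

lemma BI:
  fixes bs cs :: "nat \<Rightarrow> complex"
  assumes "inj bs"
  shows "inj cs \<Longrightarrow> (\<forall>u v. polyd2 N (\<lambda>b c. F b c u v)) \<Longrightarrow> (\<forall>j k. j + k \<le> N \<longrightarrow> R (F (bs j) (cs k)))
     \<Longrightarrow> R (F x y)"
proof (induction N arbitrary: cs F x y)
  case 0
  have "F x y = F x (cs 0)"
    using polyd2_deg0[OF 0(2)[rule_format]] by (intro ext) blast
  moreover have "R (F x (cs 0))"
  proof (rule UI[OF assms, of 0 "\<lambda>b. F b (cs 0)" x])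
    show "\<forall>u v. polyd2 0 (\<lambda>b c. F b (cs 0) u v)"
      using polyd2_subst_c[of 0 "\<lambda>b c. F b c _ _" "cs 0"] 0(2) by blast
    show "\<forall>j\<le>0. R (F (bs j) (cs 0))" using 0(3) by auto
  qed
  ultimately show ?case by simp
next
  case (Suc N)
  define c0 where "c0 = cs 0"
  have "\<forall>u v. \<exists>g. polyd2 N g \<and> (\<forall>b c. F b c u v = F b c0 u v + (c - c0) * g b c)"
    using polyd2_Dc[of "Suc N" _ c0] Suc.prems(2) by fastforce
  then obtain g where g: "\<And>u v. polyd2 N (g u v)" "\<And>u v b c. F b c u v = F b c0 u v + (c - c0) * g u v b c"
    by metis
  define G where "G = (\<lambda>b c u v. g u v b c)"
  have GP: "\<forall>u v. polyd2 N (\<lambda>b c. G b c u v)"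
    unfolding G_def using g(1) by (simp add: eta_contract_eq)
  have Fx: "F x y = (\<lambda>u v. 1 * F x c0 u v + (y - c0) * G x y u v)"
    unfolding G_def using g(2)[where b=x and c=y] by (intro ext) simp
  have injs: "inj (cs \<circ> Suc)" using inj_compose[OF Suc.prems(1) inj_Suc] .
  have "R (G (bs j) ((cs \<circ> Suc) k))" if "j + k \<le> N" for j k
  proof -
    have ne: "cs (Suc k) - c0 \<noteq> 0" using Suc.prems(1) unfolding c0_def inj_def by auto
    have Geq: "G (bs j) ((cs \<circ> Suc) k) = (\<lambda>u v. (1 / (cs (Suc k) - c0)) * (F (bs j) (cs (Suc k)) u v + (- 1) * F (bs j) c0 u v))"
    proof (intro ext)
      fix u v
      have "F (bs j) (cs (Suc k)) u v + (- 1) * F (bs j) c0 u v = (cs (Suc k) - c0) * g u v (bs j) (cs (Suc k))"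
        using g(2)[where b="bs j" and c="cs (Suc k)" and u=u and v=v] by simp
      then show "G (bs j) ((cs \<circ> Suc) k) u v = (1 / (cs (Suc k) - c0)) * (F (bs j) (cs (Suc k)) u v + (- 1) * F (bs j) c0 u v)"
        unfolding G_def using ne by simp
    qed
    have "R (F (bs j) (cs (Suc k)))" "R (F (bs j) c0)" using Suc.prems(3) that unfolding c0_def by auto
    then show ?thesis unfolding Geq by (intro Rscale Radd)
  qed
  then have "R (G x y)" using Suc.IH[OF injs GP] by blast
  moreover have "R (F x c0)"
  proof (rule UI[OF assms, of "Suc N" "\<lambda>b. F b c0" x])
    show "\<forall>u v. polyd2 (Suc N) (\<lambda>b c. F b c0 u v)"
      using polyd2_subst_c[of "Suc N" "\<lambda>b c. F b c _ _" c0] Suc.prems(2) by blast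
    show "\<forall>j\<le>Suc N. R (F (bs j) c0)" using Suc.prems(3) unfolding c0_def by auto
  qed
  ultimately show ?case unfolding Fx using Rlin by blast
qed

end


definition TPop :: "nat \<Rightarrow> qop \<Rightarrow> nop" where
  "TPop N M u v = (\<Prod>k<N. M (u ! k) (v ! k))"

lemma sym_expand:
  "(\<Sum>j\<le>N. t ^ j * sym_placement N j A u v) = (\<Prod>k<N. t * idq (u ! k) (v ! k) + A (u ! k) (v ! k))"
proof -
  let ?K = "{..<N}"
  let ?f = "\<lambda>S. t ^ card S * ((\<Prod>k\<in>S. idq (u ! k) (v ! k)) * (\<Prod>k\<in>?K - S. A (u ! k) (v ! k)))"
  have "(\<Prod>k<N. t * idq (u ! k) (v ! k) + A (u ! k) (v ! k))
      = (\<Sum>S\<in>Pow ?K. (\<Prod>k\<in>S. t * idq (u ! k) (v ! k)) * (\<Prod>k\<in>?K - S. A (u ! k) (v ! k)))"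
    by (rule prod_add) simp
  also have "\<dots> = (\<Sum>S\<in>Pow ?K. ?f S)"
  proof (rule sum.cong[OF refl])
    fix S assume "S \<in> Pow ?K"
    then have "finite S" by (auto intro: finite_subset)
    then show "(\<Prod>k\<in>S. t * idq (u ! k) (v ! k)) * (\<Prod>k\<in>?K - S. A (u ! k) (v ! k)) = ?f S"
      by (simp add: prod.distrib)
  qed
  also have "\<dots> = (\<Sum>j\<in>{..N}. \<Sum>S\<in>{S \<in> Pow ?K. card S = j}. ?f S)"
  proof (rule sum.group[symmetric])
    show "card ` Pow ?K \<subseteq> {..N}"
      by (auto simp: card_mono[of ?K, simplified])
  qed auto
  also have "\<dots> = (\<Sum>j\<le>N. t ^ j * sym_placement N j A u v)"
  proof (rule sum.cong[OF refl])
    fix j assume "j \<in> {..N}"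
    have e: "{S \<in> Pow ?K. card S = j} = {S. S \<subseteq> ?K \<and> card S = j}" by auto
    have "t ^ j * sym_placement N j A u v =
       (\<Sum>S\<in>{S. S \<subseteq> ?K \<and> card S = j}. t ^ j * (\<Prod>k<N. (if k \<in> S then idq else A) (u ! k) (v ! k)))"
      unfolding sym_placement_def by (simp add: sum_distrib_left)
    also have "\<dots> = (\<Sum>S\<in>{S. S \<subseteq> ?K \<and> card S = j}. ?f S)"
    proof (rule sum.cong[OF refl])
      fix S assume S: "S \<in> {S. S \<subseteq> ?K \<and> card S = j}"
      have "(\<Prod>k<N. (if k \<in> S then idq else A) (u ! k) (v ! k))
          = (\<Prod>k<N. if k \<in> S then idq (u ! k) (v ! k) else A (u ! k) (v ! k))"
        by (rule prod.cong) auto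
      also have "\<dots> = (\<Prod>k\<in>?K \<inter> {k. k \<in> S}. idq (u ! k) (v ! k)) * (\<Prod>k\<in>?K \<inter> - {k. k \<in> S}. A (u ! k) (v ! k))"
        by (rule prod.If_cases) simp
      also have "?K \<inter> {k. k \<in> S} = S" using S by auto
      also have "?K \<inter> - {k. k \<in> S} = ?K - S" by auto
      finally show "t ^ j * (\<Prod>k<N. (if k \<in> S then idq else A) (u ! k) (v ! k)) = ?f S"
        using S by simp
    qed
    finally show "(\<Sum>S\<in>{S \<in> Pow ?K. card S = j}. ?f S) = t ^ j * sym_placement N j A u v"
      unfolding e by simp
  qed
  finally show ?thesis by simp
qed



definition grid :: "nat \<Rightarrow> (nat \<times> nat) set" where
  "grid N = {(j, k). j + k \<le> N}"

lemma grid_finite: "finite (grid N)"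
proof -
  have "grid N \<subseteq> {..N} \<times> {..N}" unfolding grid_def by auto
  then show ?thesis by (rule finite_subset) simp
qed

lemma grid_card: "2 * card (grid N) = (N + 1) * (N + 2)"
proof (induction N)
  case 0
  have "grid 0 = {(0, 0)}" unfolding grid_def by auto
  then show ?case by simp
next
  case (Suc N)
  have e: "grid (Suc N) = grid N \<union> (\<lambda>j. (j, Suc N - j)) ` {..Suc N}"
    unfolding grid_def by (auto simp: image_iff)
  have d: "grid N \<inter> (\<lambda>j. (j, Suc N - j)) ` {..Suc N} = {}" unfolding grid_def by auto
  have i: "inj_on (\<lambda>j. (j, Suc N - j)) {..Suc N}" by (auto simp: inj_on_def)
  have "card (grid (Suc N)) = card (grid N) + Suc (Suc N)"
    unfolding e using d i grid_finite by (simp add: card_Un_disjoint card_image)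
  then show ?case using Suc by (simp add: algebra_simps)
qed

lemma grid_card': "card (grid N) = (N + 1) * (N + 2) div 2"
  using grid_card[of N] by simp

definition inR :: "nat \<Rightarrow> nat \<Rightarrow> (nat \<Rightarrow> real) \<Rightarrow> (nat \<Rightarrow> real) \<Rightarrow> (nat \<Rightarrow> real) \<Rightarrow> nop \<Rightarrow> bool" where
  "inR N nA b c d F \<longleftrightarrow> (\<exists>\<alpha>::nat \<Rightarrow> nat \<Rightarrow> complex. \<forall>u v. length u = N \<longrightarrow> length v = N \<longrightarrow>
     F u v = (\<Sum>i<nA. \<Sum>j\<le>N. \<alpha> i j * sym_placement N j (pauli_comb (b i) (c i) (d i)) u v))"

lemma inR_cspace: "cspace (inR N nA b c d)"
proof
  fix F G assume "inR N nA b c d F" "inR N nA b c d G"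
  then obtain a1 a2 where
    "\<forall>u v. length u = N \<longrightarrow> length v = N \<longrightarrow>
     F u v = (\<Sum>i<nA. \<Sum>j\<le>N. a1 i j * sym_placement N j (pauli_comb (b i) (c i) (d i)) u v)"
    "\<forall>u v. length u = N \<longrightarrow> length v = N \<longrightarrow>
     G u v = (\<Sum>i<nA. \<Sum>j\<le>N. a2 i j * sym_placement N j (pauli_comb (b i) (c i) (d i)) u v)"
    unfolding inR_def by blast
  then show "inR N nA b c d (\<lambda>u v. F u v + G u v)"
    unfolding inR_def
    by (intro exI[of _ "\<lambda>i j. a1 i j + a2 i j"] allI impI) (simp add: distrib_right sum.distrib)
next
  fix F s assume "inR N nA b c d F"
  then obtain a1 where
    "\<forall>u v. length u = N \<longrightarrow> length v = N \<longrightarrow>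
     F u v = (\<Sum>i<nA. \<Sum>j\<le>N. a1 i j * sym_placement N j (pauli_comb (b i) (c i) (d i)) u v)"
    unfolding inR_def by blast
  then show "inR N nA b c d (\<lambda>u v. s * F u v)"
    unfolding inR_def
    by (intro exI[of _ "\<lambda>i j. s * a1 i j"] allI impI) (simp add: sum_distrib_left mult.assoc)
qed

lemma inR_zero: "inR N nA b c d (\<lambda>u v. 0)"
  unfolding inR_def by (intro exI[of _ "\<lambda>i j. 0"]) simp

lemma inR_cong: "inR N nA b c d F \<Longrightarrow> (\<And>u v. length u = N \<Longrightarrow> length v = N \<Longrightarrow> G u v = F u v)
   \<Longrightarrow> inR N nA b c d G"
  unfolding inR_def by simp

lemma inR_sum: "finite I \<Longrightarrow> (\<And>i. i \<in> I \<Longrightarrow> inR N nA b c d (F i)) \<Longrightarrow> inR N nA b c d (\<lambda>u v. \<Sum>i\<in>I. w i * F i u v)"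
proof (induction I rule: finite_induct)
  case empty
  then show ?case using inR_zero by simp
next
  case (insert x I)
  have "inR N nA b c d (\<lambda>u v. w x * F x u v + (\<Sum>i\<in>I. w i * F i u v))"
    using cspace.Radd[OF inR_cspace] cspace.Rscale[OF inR_cspace] insert by simp
  then show ?case using insert by simp
qed

lemma inR_TP:
  assumes "i < nA"
  shows "inR N nA b c d (\<lambda>u v. \<Prod>k<N. t * idq (u ! k) (v ! k) + pauli_comb (b i) (c i) (d i) (u ! k) (v ! k))"
  unfolding inR_def
proof (intro exI[of _ "\<lambda>i' j. if i' = i then t ^ j else 0"] allI impI)
  fix u v :: "bool list"
  have "(\<Sum>i'<nA. \<Sum>j\<le>N. (if i' = i then t ^ j else 0) * sym_placement N j (pauli_comb (b i') (c i') (d i')) u v)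
      = (\<Sum>i'<nA. if i' = i then (\<Sum>j\<le>N. t ^ j * sym_placement N j (pauli_comb (b i) (c i) (d i)) u v) else 0)"
    by (rule sum.cong) auto
  also have "\<dots> = (\<Sum>j\<le>N. t ^ j * sym_placement N j (pauli_comb (b i) (c i) (d i)) u v)"
    using assms by simp
  finally show "(\<Prod>k<N. t * idq (u ! k) (v ! k) + pauli_comb (b i) (c i) (d i) (u ! k) (v ! k)) =
    (\<Sum>i'<nA. \<Sum>j\<le>N. (if i' = i then t ^ j else 0) * sym_placement N j (pauli_comb (b i') (c i') (d i')) u v)"
    using sym_expand by simp
qed

definition pcc :: "complex \<Rightarrow> complex \<Rightarrow> qop" where
  "pcc x y p q = x * sigmaX p q + y * sigmaY p q + sigmaZ p q"

lemma polyd2_affine: "polyd2 1 (\<lambda>b c. a0 + b * a1 + c * a2)"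
proof -
  have h1: "polyd2 1 (\<lambda>b c. b * a1)" by (rule pmult[OF pvarb[of 1] pconst[of 0 a1]]) simp_all
  have h2: "polyd2 1 (\<lambda>b c. c * a2)" by (rule pmult[OF pvarc[of 1] pconst[of 0 a2]]) simp_all
  show ?thesis by (rule padd[OF padd[OF pconst[of 1 a0] h1] h2])
qed

lemma inR_general_bc:
  assumes h: "\<And>j k. j + k \<le> N \<Longrightarrow> \<exists>i<nA. b i = real j \<and> c i = real k \<and> d i = 1"
  shows "inR N nA b c d (\<lambda>u v. \<Prod>k<N. t * idq (u ! k) (v ! k) + pcc x y (u ! k) (v ! k))"
proof -
  interpret cspace "inR N nA b c d" by (rule inR_cspace)
  let ?F = "\<lambda>x y u v. \<Prod>k<N. t * idq (u ! k) (v ! k) + pcc x y (u ! k) (v ! k)"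
  have injs: "inj (\<lambda>j::nat. of_nat j :: complex)" using inj_of_nat by simp
  have P: "\<forall>u v. polyd2 N (\<lambda>b c. ?F b c u v)"
  proof (intro allI)
    fix u v :: "bool list"
    have "polyd2 (card {..<N}) (\<lambda>b c. \<Prod>k\<in>{..<N}. t * idq (u ! k) (v ! k) + pcc b c (u ! k) (v ! k))"
    proof (rule polyd2_prod)
      show "\<forall>l\<in>{..<N}. polyd2 1 (\<lambda>b c. t * idq (u ! l) (v ! l) + pcc b c (u ! l) (v ! l))"
      proof
        fix l
        have eq: "(\<lambda>b c. t * idq (u ! l) (v ! l) + pcc b c (u ! l) (v ! l)) =
          (\<lambda>b c. (t * idq (u ! l) (v ! l) + sigmaZ (u ! l) (v ! l)) + b * sigmaX (u ! l) (v ! l) + c * sigmaY (u ! l) (v ! l))"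
          unfolding pcc_def by (auto simp: algebra_simps)
        show "polyd2 1 (\<lambda>b c. t * idq (u ! l) (v ! l) + pcc b c (u ! l) (v ! l))"
          unfolding eq by (rule polyd2_affine)
      qed
    qed simp
    then show "polyd2 N (\<lambda>b c. ?F b c u v)" by simp
  qed
  have G: "\<forall>j k. j + k \<le> N \<longrightarrow> inR N nA b c d (?F (of_nat j) (of_nat k))"
  proof (intro allI impI)
    fix j k assume "j + k \<le> N"
    then obtain i where i: "i < nA" "b i = real j" "c i = real k" "d i = 1" using h by blast
    have eq: "?F (of_nat j) (of_nat k) = (\<lambda>u v. \<Prod>k<N. t * idq (u ! k) (v ! k) + pauli_comb (b i) (c i) (d i) (u ! k) (v ! k))"
    proof -
      have pe: "\<And>p q. pcc (of_nat j) (of_nat k) p q = pauli_comb (b i) (c i) (d i) p q"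
        unfolding pcc_def pauli_comb_def using i(2-4) by simp
      show ?thesis by (simp only: pe)
    qed
    show "inR N nA b c d (?F (of_nat j) (of_nat k))" unfolding eq by (rule inR_TP[OF i(1)])
  qed
  show ?thesis by (rule BI[OF injs injs P G])
qed



lemma inR_M:
  assumes h: "\<And>j k. j + k \<le> N \<Longrightarrow> \<exists>i<nA. b i = real j \<and> c i = real k \<and> d i = 1"
    and ne: "M False False \<noteq> M True True"
  shows "inR N nA b c d (TPop N M)"
proof -
  define s where "s = (M False False - M True True) / 2"
  have s0: "s \<noteq> 0" using ne unfolding s_def by simp
  define t where "t = (M False False + M True True) / (2 * s)"
  define x where "x = (M False True + M True False) / (2 * s)"
  define y where "y = \<i> * (M False True - M True False) / (2 * s)"
  have st: "s * t = (M False False + M True True) / 2" unfolding t_def using s0 by (simp add: field_simps)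
  have sx: "s * x = (M False True + M True False) / 2" unfolding x_def using s0 by (simp add: field_simps)
  have sy: "s * y = \<i> * (M False True - M True False) / 2" unfolding y_def using s0 by (simp add: field_simps)
  have Meq: "M p q = s * (t * idq p q + pcc x y p q)" for p q
  proof -
    have "s * (t * idq p q + pcc x y p q) = (s * t) * idq p q + (s * x) * sigmaX p q + (s * y) * sigmaY p q + s * sigmaZ p q"
      unfolding pcc_def by (simp add: algebra_simps)
    also have "s * sigmaZ p q = (M False False - M True True) / 2 * sigmaZ p q" unfolding s_def by simp
    also have "(s * t) * idq p q + (s * x) * sigmaX p q + (s * y) * sigmaY p q + (M False False - M True True) / 2 * sigmaZ p q = M p q"
      unfolding st sx sy idq_def sigmaX_def sigmaY_def sigmaZ_def
      by (cases p; cases q) (simp_all add: field_simps)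
    finally show ?thesis by simp
  qed
  interpret cspace "inR N nA b c d" by (rule inR_cspace)
  have "inR N nA b c d (\<lambda>u v. s ^ N * (\<Prod>k<N. t * idq (u ! k) (v ! k) + pcc x y (u ! k) (v ! k)))"
    by (rule Rscale[OF inR_general_bc[OF h]])
  then show ?thesis
  proof (rule inR_cong)
    fix u v :: "bool list"
    show "TPop N M u v = s ^ N * (\<Prod>k<N. t * idq (u ! k) (v ! k) + pcc x y (u ! k) (v ! k))"
      unfolding TPop_def Meq by (simp add: prod.distrib)
  qed
qed

lemma prod_count:
  fixes f :: "'a::finite \<Rightarrow> 'b::comm_monoid_mult"
  shows "(\<Prod>k<length xs. f (xs ! k)) = (\<Prod>x\<in>UNIV. f x ^ count_list xs x)"
proof (induction xs)
  case Nil
  then show ?case by simp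
next
  case (Cons a xs)
  have "(\<Prod>k<length (a # xs). f ((a # xs) ! k)) = f a * (\<Prod>k<length xs. f (xs ! k))"
    by (simp only: length_Cons prod.lessThan_Suc_shift nth_Cons_0 nth_Cons_Suc)
  also have "\<dots> = (\<Prod>x\<in>UNIV. if x = a then f x else 1) * (\<Prod>x\<in>UNIV. f x ^ count_list xs x)"
    using Cons by simp
  also have "\<dots> = (\<Prod>x\<in>UNIV. (if x = a then f x else 1) * f x ^ count_list xs x)"
    by (simp add: prod.distrib)
  also have "\<dots> = (\<Prod>x\<in>UNIV. f x ^ count_list (a # xs) x)"
    by (rule prod.cong) auto
  finally show ?case .
qed

definition cntf :: "bool list \<Rightarrow> bool list \<Rightarrow> bool \<times> bool \<Rightarrow> nat" where
  "cntf u v pq = count_list (zip u v) pq"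

lemma TPop_count:
  assumes "length u = N" "length v = N"
  shows "TPop N M u v = (\<Prod>pq\<in>UNIV. M (fst pq) (snd pq) ^ cntf u v pq)"
proof -
  have "TPop N M u v = (\<Prod>k<length (zip u v). (\<lambda>pq. M (fst pq) (snd pq)) (zip u v ! k))"
    unfolding TPop_def using assms by simp
  then show ?thesis unfolding cntf_def using prod_count[of "\<lambda>pq. M (fst pq) (snd pq)" "zip u v"] by simp
qed

lemma orth:
  assumes "k < L" "m < L"
  shows "(\<Sum>l<L. cis (2 * pi * real l * real k / real L) * cis (- (2 * pi * real l * real m / real L)))
     = (if k = m then of_nat L else 0)"
proof -
  have L0: "real L > 0" using assms by simp
  define dd where "dd = real k - real m"
  define z where "z = cis (2 * pi * dd / real L)"
  have tm: "cis (2 * pi * real l * real k / real L) * cis (- (2 * pi * real l * real m / real L)) = z ^ l" for l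
  proof -
    have "z ^ l = cis (real l * (2 * pi * dd / real L))" unfolding z_def by (rule Complex.DeMoivre)
    then show ?thesis unfolding cis_mult dd_def by (simp add: field_simps) (simp add: diff_divide_distrib)
  qed
  show ?thesis
  proof (cases "k = m")
    case True
    then show ?thesis unfolding tm z_def dd_def by simp
  next
    case False
    have zL: "z ^ L = 1"
    proof -
      have "z ^ L = cis (2 * pi * dd)" unfolding z_def Complex.DeMoivre using L0 by (simp add: field_simps)
      also have "dd = of_int (int k - int m)" unfolding dd_def by simp
      finally show ?thesis by simp
    qed
    have z1: "z \<noteq> 1"
    proof
      assume "z = 1"
      then have "cos (2 * pi * dd / real L) = 1" unfolding z_def by (metis Re_complex_of_real complex.sel(1) cis.sel(1) one_complex.sel(1))
      then obtain n :: int where n: "2 * pi * dd / real L = of_int n * 2 * pi" using cos_one_2pi_int by blast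
      then have dn: "dd = of_int n * real L" using L0 by (simp add: field_simps)
      have "dd \<noteq> 0" "\<bar>dd\<bar> < real L" using False assms unfolding dd_def by auto
      then have "n \<noteq> 0" "\<bar>real_of_int n\<bar> * real L < real L" using dn L0 by (auto simp: abs_mult)
      moreover have "1 \<le> \<bar>real_of_int n\<bar>"
      proof -
        have "1 \<le> \<bar>n\<bar>" using \<open>n \<noteq> 0\<close> by arith
        then show ?thesis by linarith
      qed
      then have "1 * real L \<le> \<bar>real_of_int n\<bar> * real L" using L0 by (intro mult_right_mono) auto
      ultimately show False by linarith
    qed
    show ?thesis unfolding tm using geometric_sum[OF z1, of L] zL False by simp
  qed
qed



definition sc :: "bool \<times> bool \<Rightarrow> complex" where
  "sc pq = (if pq = (True, True) then 2 else 1)"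

definition Mg :: "nat \<Rightarrow> (bool \<times> bool \<Rightarrow> nat) \<Rightarrow> qop" where
  "Mg N g p q = sc (p, q) * cis (2 * pi * real (g (p, q)) / real (Suc N))"

definition wt :: "nat \<Rightarrow> bool \<times> bool \<Rightarrow> nat \<Rightarrow> nat \<Rightarrow> complex" where
  "wt N pq l m = (1 / of_nat (Suc N)) * cis (- (2 * pi * real l * real m / real (Suc N))) / sc pq ^ m"

lemma sc_nz: "sc pq \<noteq> 0" unfolding sc_def by simp

lemma ind1:
  assumes "k \<le> N" "m \<le> N"
  shows "(\<Sum>l<Suc N. wt N pq l m * (sc pq * cis (2 * pi * real l / real (Suc N))) ^ k) = (if k = m then 1 else 0)"
proof -
  let ?L = "Suc N"
  have tm: "wt N pq l m * (sc pq * cis (2 * pi * real l / real ?L)) ^ k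
      = (sc pq ^ k / sc pq ^ m / of_nat ?L) *
        (cis (2 * pi * real l * real k / real ?L) * cis (- (2 * pi * real l * real m / real ?L)))" for l
  proof -
    have "cis (2 * pi * real l / real ?L) ^ k = cis (2 * pi * real l * real k / real ?L)"
      unfolding Complex.DeMoivre by (simp add: field_simps)
    then show ?thesis unfolding wt_def power_mult_distrib using sc_nz[of pq] by (simp add: field_simps)
  qed
  have "(\<Sum>l<?L. wt N pq l m * (sc pq * cis (2 * pi * real l / real ?L)) ^ k)
     = (\<Sum>l<?L. (sc pq ^ k / sc pq ^ m / of_nat ?L) * (cis (2 * pi * real l * real k / real ?L) * cis (- (2 * pi * real l * real m / real ?L))))"
    by (rule sum.cong[OF refl]) (rule tm)
  also have "\<dots> = (sc pq ^ k / sc pq ^ m / of_nat ?L) * (\<Sum>l<?L. cis (2 * pi * real l * real k / real ?L) * cis (- (2 * pi * real l * real m / real ?L)))"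
    by (rule sum_distrib_left[symmetric])
  also have "\<dots> = (sc pq ^ k / sc pq ^ m / of_nat ?L) * (if k = m then of_nat ?L else 0)"
    using orth[of k ?L m] assms by simp
  also have "\<dots> = (if k = m then 1 else 0)"
    using sc_nz[of pq] by (simp del: of_nat_Suc)
  finally show ?thesis .
qed

lemma prod_ind: "(\<Prod>x\<in>(UNIV :: 'a :: finite set). if P x then 1 else (0::complex)) = (if (\<forall>x. P x) then 1 else 0)"
proof (cases "\<forall>x. P x")
  case True
  then show ?thesis by simp
next
  case False
  then obtain x where "\<not> P x" by blast
  then have "(\<Prod>x\<in>(UNIV :: 'a set). if P x then 1 else (0::complex)) = 0"
    by (intro prod_zero) auto
  then show ?thesis using False by simp
qed

lemma ind_formula:
  assumes K0: "\<forall>pq. K0 pq \<le> N" and len: "length u = N" "length v = N"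
  shows "(if cntf u v = K0 then 1 else 0) =
    (\<Sum>g\<in>PiE UNIV (\<lambda>_. {..<Suc N}). (\<Prod>pq\<in>UNIV. wt N pq (g pq) (K0 pq)) * TPop N (Mg N g) u v)"
proof -
  have cb: "cntf u v pq \<le> N" for pq
    unfolding cntf_def using count_le_length[of "zip u v" pq] len by simp
  have "(if cntf u v = K0 then 1 else (0::complex)) = (\<Prod>pq\<in>UNIV. if cntf u v pq = K0 pq then 1 else 0)"
    unfolding prod_ind fun_eq_iff by simp
  also have "\<dots> = (\<Prod>pq\<in>UNIV. \<Sum>l<Suc N. wt N pq l (K0 pq) * (sc pq * cis (2 * pi * real l / real (Suc N))) ^ cntf u v pq)"
    using ind1[OF cb K0[rule_format]] by simp
  also have "\<dots> = (\<Sum>g\<in>PiE UNIV (\<lambda>_. {..<Suc N}). \<Prod>pq\<in>UNIV. wt N pq (g pq) (K0 pq) * (sc pq * cis (2 * pi * real (g pq) / real (Suc N))) ^ cntf u v pq)"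
    by (rule prod_sum_PiE) auto
  also have "\<dots> = (\<Sum>g\<in>PiE UNIV (\<lambda>_. {..<Suc N}). (\<Prod>pq\<in>UNIV. wt N pq (g pq) (K0 pq)) * TPop N (Mg N g) u v)"
  proof (rule sum.cong[OF refl])
    fix g :: "bool \<times> bool \<Rightarrow> nat"
    have "TPop N (Mg N g) u v = (\<Prod>pq\<in>UNIV. (sc pq * cis (2 * pi * real (g pq) / real (Suc N))) ^ cntf u v pq)"
      unfolding TPop_count[OF len] Mg_def by simp
    then show "(\<Prod>pq\<in>UNIV. wt N pq (g pq) (K0 pq) * (sc pq * cis (2 * pi * real (g pq) / real (Suc N))) ^ cntf u v pq)
        = (\<Prod>pq\<in>UNIV. wt N pq (g pq) (K0 pq)) * TPop N (Mg N g) u v"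
      by (simp add: prod.distrib)
  qed
  finally show ?thesis .
qed

lemma inR_ind:
  assumes h: "\<And>j k. j + k \<le> N \<Longrightarrow> \<exists>i<nA. b i = real j \<and> c i = real k \<and> d i = 1"
    and K0: "\<forall>pq. K0 pq \<le> N"
  shows "inR N nA b c d (\<lambda>u v. if cntf u v = K0 then 1 else 0)"
proof -
  have "inR N nA b c d (\<lambda>u v. \<Sum>g\<in>PiE UNIV (\<lambda>_. {..<Suc N}). (\<Prod>pq\<in>UNIV. wt N pq (g pq) (K0 pq)) * TPop N (Mg N g) u v)"
  proof (rule inR_sum)
    show "finite (PiE (UNIV :: (bool \<times> bool) set) (\<lambda>_. {..<Suc N}))" by (rule finite_PiE) auto
  next
    fix g :: "bool \<times> bool \<Rightarrow> nat"
    have "Mg N g False False \<noteq> Mg N g True True"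
    proof
      assume "Mg N g False False = Mg N g True True"
      then have "norm (Mg N g False False) = norm (Mg N g True True)" by simp
      then show False unfolding Mg_def sc_def by (simp add: norm_mult)
    qed
    then show "inR N nA b c d (TPop N (Mg N g))" using inR_M[OF h, where M="Mg N g"] by blast
  qed
  then show ?thesis
    by (rule inR_cong) (use ind_formula[OF K0] in simp)
qed



lemma PI_cnt:
  assumes PI: "perm_invariant N \<rho>"
    and len: "length u = N" "length v = N" "length u' = N" "length v' = N"
    and eq: "cntf u v = cntf u' v'"
  shows "\<rho> u v = \<rho> u' v'"
proof -
  have "mset (zip u v) = mset (zip u' v')"
  proof (rule multiset_eqI)
    fix x show "count (mset (zip u v)) x = count (mset (zip u' v')) x"
      unfolding count_mset using fun_cong[OF eq, of x] unfolding cntf_def .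
  qed
  then obtain p where p: "p permutes {..<length (zip u' v')}" "permute_list p (zip u' v') = zip u v"
    using mset_eq_permutation by metis
  have lz: "length (zip u' v') = N" using len by simp
  have pin: "i < N \<Longrightarrow> p i < N" for i using p(1) lz permutes_in_image by fastforce
  have "map fst (permute_list p (zip u' v')) = perm_bits N p u'"
    unfolding permute_list_def perm_bits_def lz using pin len by (auto intro!: map_cong)
  moreover have "map fst (zip u v) = u" using len by simp
  ultimately have pu: "perm_bits N p u' = u" using p(2) by simp
  have "map snd (permute_list p (zip u' v')) = perm_bits N p v'"
    unfolding permute_list_def perm_bits_def lz using pin len by (auto intro!: map_cong)
  moreover have "map snd (zip u v) = v" using len by simp
  ultimately have pv: "perm_bits N p v' = v" using p(2) by simp
  have "op_eq N (perm_conj N p \<rho>) \<rho>" using PI p(1) lz unfolding perm_invariant_def by simp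
  then have "perm_conj N p \<rho> u' v' = \<rho> u' v'" using len unfolding op_eq_def by blast
  then show ?thesis unfolding perm_conj_def pu pv .
qed

lemma inR_PI:
  assumes h: "\<And>j k. j + k \<le> N \<Longrightarrow> \<exists>i<nA. b i = real j \<and> c i = real k \<and> d i = 1"
    and PI: "perm_invariant N \<rho>"
  shows "inR N nA b c d \<rho>"
proof -
  define S where "S = PiE (UNIV :: (bool \<times> bool) set) (\<lambda>_. {..N})"
  have fS: "finite S" unfolding S_def by (rule finite_PiE) auto
  define rep where "rep K0 = (SOME uv. length (fst uv) = N \<and> length (snd uv) = N \<and> cntf (fst uv) (snd uv) = K0)" for K0
  define hr where "hr K0 = \<rho> (fst (rep K0)) (snd (rep K0))" for K0
  have "inR N nA b c d (\<lambda>u v. \<Sum>K0\<in>S. hr K0 * (if cntf u v = K0 then 1 else 0))"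
  proof (rule inR_sum[OF fS])
    fix K0 assume "K0 \<in> S"
    then have "\<forall>pq. K0 pq \<le> N" unfolding S_def by (auto simp: PiE_iff)
    then show "inR N nA b c d (\<lambda>u v. if cntf u v = K0 then 1 else 0)" using inR_ind[OF h] by blast
  qed
  then show ?thesis
  proof (rule inR_cong)
    fix u v :: "bool list" assume len: "length u = N" "length v = N"
    have "cntf u v pq \<le> N" for pq
    proof -
      have "count_list (zip u v) pq \<le> length (zip u v)" by (rule count_le_length)
      then show ?thesis unfolding cntf_def using len by simp
    qed
    then have cS: "cntf u v \<in> S"
      unfolding S_def by (auto simp: PiE_iff)
    have "(\<Sum>K0\<in>S. hr K0 * (if cntf u v = K0 then 1 else 0)) = (\<Sum>K0\<in>S. if cntf u v = K0 then hr K0 else 0)"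
      by (rule sum.cong) auto
    also have "\<dots> = hr (cntf u v)" using fS cS by simp
    also have "\<dots> = \<rho> u v"
    proof -
      let ?P = "\<lambda>uv. length (fst uv) = N \<and> length (snd uv) = N \<and> cntf (fst uv) (snd uv) = cntf u v"
      have "?P (u, v)" using len by simp
      then have "?P (rep (cntf u v))" unfolding rep_def by (rule someI)
      then show ?thesis unfolding hr_def using PI_cnt[OF PI len] by metis
    qed
    finally show "\<rho> u v = (\<Sum>K0\<in>S. hr K0 * (if cntf u v = K0 then 1 else 0))" by simp
  qed
qed

lemma idq_herm: "idq q p = cnj (idq p q)" unfolding idq_def by simp

lemma pauli_herm: "pauli_comb b c d q p = cnj (pauli_comb b c d p q)"
  unfolding pauli_comb_def sigmaX_def sigmaY_def sigmaZ_def by (cases p; cases q) simp_all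

lemma sym_herm: "sym_placement N j (pauli_comb b c d) v u = cnj (sym_placement N j (pauli_comb b c d) u v)"
  unfolding sym_placement_def cnj_sum cnj_prod
proof (rule sum.cong[OF refl], rule prod.cong[OF refl])
  fix S k show "(if k \<in> S then idq else pauli_comb b c d) (v ! k) (u ! k) =
       cnj ((if k \<in> S then idq else pauli_comb b c d) (u ! k) (v ! k))"
    by (cases "k \<in> S") (simp_all add: idq_def pauli_herm[of b c d "v ! k" "u ! k"])
qed

lemma sym_herm2: "cnj (sym_placement N j (pauli_comb b c d) v u) = sym_placement N j (pauli_comb b c d) u v"
  by (subst sym_herm[where u=v and v=u]) simp

lemma herm_real:
  assumes R: "inR N nA b c d \<rho>" and H: "hermitian_op N \<rho>"
  shows "\<exists>\<alpha>. op_eq N \<rho> (lms_expansion N nA b c d \<alpha>)"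
proof -
  obtain a where a: "\<And>u v. length u = N \<Longrightarrow> length v = N \<Longrightarrow>
     \<rho> u v = (\<Sum>i<nA. \<Sum>j\<le>N. a i j * sym_placement N j (pauli_comb (b i) (c i) (d i)) u v)"
    using R unfolding inR_def by blast
  show ?thesis
  proof (intro exI[of _ "\<lambda>i j. Re (a i j)"])
    show "op_eq N \<rho> (lms_expansion N nA b c d (\<lambda>i j. Re (a i j)))"
      unfolding op_eq_def lms_expansion_def
    proof (intro allI impI)
      fix u v :: "bool list" assume len: "length u = N" "length v = N"
      have hv: "\<rho> v u = cnj (\<rho> u v)" using H len unfolding hermitian_op_def by blast
      have "\<rho> u v = cnj (\<rho> v u)" unfolding hv by simp
      also have "\<dots> = (\<Sum>i<nA. \<Sum>j\<le>N. cnj (a i j) * sym_placement N j (pauli_comb (b i) (c i) (d i)) u v)"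
        unfolding a[OF len(2) len(1)] by (simp add: sym_herm2)
      finally have e2: "\<rho> u v = (\<Sum>i<nA. \<Sum>j\<le>N. cnj (a i j) * sym_placement N j (pauli_comb (b i) (c i) (d i)) u v)" .
      have "2 * \<rho> u v = \<rho> u v + \<rho> u v" by simp
      also have "\<dots> = (\<Sum>i<nA. \<Sum>j\<le>N. a i j * sym_placement N j (pauli_comb (b i) (c i) (d i)) u v)
          + (\<Sum>i<nA. \<Sum>j\<le>N. cnj (a i j) * sym_placement N j (pauli_comb (b i) (c i) (d i)) u v)"
        by (rule arg_cong2[where f="(+)", OF a[OF len] e2])
      also have "\<dots> = (\<Sum>i<nA. \<Sum>j\<le>N. (a i j + cnj (a i j)) * sym_placement N j (pauli_comb (b i) (c i) (d i)) u v)"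
        by (simp add: sum.distrib[symmetric] distrib_right)
      also have "\<dots> = 2 * (\<Sum>i<nA. \<Sum>j\<le>N. complex_of_real (Re (a i j)) * sym_placement N j (pauli_comb (b i) (c i) (d i)) u v)"
        unfolding complex_add_cnj by (simp add: sum_distrib_left mult.assoc)
      finally show "\<rho> u v = (\<Sum>i<nA. \<Sum>j\<le>N. complex_of_real (Re (a i j)) * sym_placement N j (pauli_comb (b i) (c i) (d i)) u v)"
        by simp
    qed
  qed
qed

theorem theorem2:
  fixes N :: nat
  assumes "N \<ge> 1"
  shows "(\<exists>b c d :: nat \<Rightarrow> real.
            \<forall>\<rho>. perm_invariant N \<rho> \<and> hermitian_op N \<rho> \<longrightarrow>
              (\<exists>\<alpha>. op_eq N \<rho> (lms_expansion N ((N + 1) * (N + 2) div 2) b c d \<alpha>)))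
       \<and> (\<forall>\<rho>. perm_invariant N \<rho> \<and> hermitian_op N \<rho> \<longrightarrow>
              meas_complexity N \<rho> \<le> (N + 1) * (N + 2) div 2)"
proof -
  let ?n = "(N + 1) * (N + 2) div 2"
  obtain hh where hh: "bij_betw hh {0..<card (grid N)} (grid N)"
    using ex_bij_betw_nat_finite[OF grid_finite] by blast
  define b where "b i = real (fst (hh i))" for i
  define c where "c i = real (snd (hh i))" for i
  define d where "d i = (1::real)" for i :: nat
  have h: "\<exists>i<?n. b i = real j \<and> c i = real k \<and> d i = 1" if "j + k \<le> N" for j k
  proof -
    have "(j, k) \<in> grid N" using that unfolding grid_def by simp
    then have "(j, k) \<in> hh ` {0..<card (grid N)}" using hh unfolding bij_betw_def by simp
    then obtain i where "i \<in> {0..<card (grid N)}" "hh i = (j, k)" by (rule imageE) simp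
    then show ?thesis unfolding b_def c_def d_def grid_card' by (intro exI[of _ i]) auto
  qed
  have main: "\<forall>\<rho>. perm_invariant N \<rho> \<and> hermitian_op N \<rho> \<longrightarrow>
              (\<exists>\<alpha>. op_eq N \<rho> (lms_expansion N ?n b c d \<alpha>))"
    using herm_real inR_PI[OF h] by blast
  show ?thesis
  proof
    show "\<exists>b c d :: nat \<Rightarrow> real. \<forall>\<rho>. perm_invariant N \<rho> \<and> hermitian_op N \<rho> \<longrightarrow>
              (\<exists>\<alpha>. op_eq N \<rho> (lms_expansion N ?n b c d \<alpha>))"
      using main by blast
    show "\<forall>\<rho>. perm_invariant N \<rho> \<and> hermitian_op N \<rho> \<longrightarrow> meas_complexity N \<rho> \<le> ?n"
    proof (intro allI impI)
      fix \<rho> assume "perm_invariant N \<rho> \<and> hermitian_op N \<rho>"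
      then have "\<exists>b c d \<alpha>. op_eq N \<rho> (lms_expansion N ?n b c d \<alpha>)" using main by blast
      then show "meas_complexity N \<rho> \<le> ?n" unfolding meas_complexity_def by (rule Least_le)
    qed
  qed
qed

end
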